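(* Let $a,c>0$ and $b,d<0$ be real numbers with $x_A<x_B$, and let $W_0(z)=1$, $W_1(z)=z$, $W_n(z)=(az+b)W_{n-1}(z)+(cz+d)W_{n-2}(z)$ for $n\ge2$. Then $u,v$ are real and $$u\le x_\Delta^-<x_A<x_\Delta^+\le v<x_B,\qquad u<0<v,$$ and for every $n\ge0$, $(-1)^nW_n(u)>0$ and $W_n(v)>0$. Moreover, both $u$ and $v$ are limits of zeros of $\{W_n(z)\}$.
   Context: Notation: $A(z)=az+b$, $B(z)=cz+d$, $x_A=-b/a$, $x_B=-d/c$, $\Delta_\Delta=c^2-a^2B(x_A)$ (positive here), $x_\Delta^\pm=x_A+\frac{-2c\pm2\sqrt{\Delta_\Delta}}{a^2}$, $g(z)=(1-a)z^2-(b+c)z-d$, $\Delta_g=(b+c)^2+4d(1-a)$, $F=\Delta_g-\Delta_\Delta=d(a-2)^2+bc(2-a)+b^2$. The zeros of $g$ are $x_g^\pm=\frac{b+c}{2(1-a)}\pm\frac{\sqrt{\Delta_g}}{2|1-a|}$ if $a\neq1$, and $x_g^\pm=-d/(b+c)$ if $a=1$ and $b+c\ne0$. Define $(u,v)=(x_\Delta^-,x_\Delta^+)$ if $a<2$ and $F\le0$; $(u,v)=(x_g^-,x_g^+)$ if $a>2$ and $F<0$; $(u,v)=(x_g^+,x_\Delta^+)$ if $a<1$ and $F>0$; and $(u,v)=(x_g^-,x_\Delta^+)$ in all other cases. A number $z^*$ is a limit of zeros of $\{W_n\}$ if there exist zeros $z_n$ of $W_n$ with $z_n\to z^*$. *)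

theory Defs
  imports "HOL-Analysis.Analysis"
begin

fun W :: "'a::comm_ring_1 \<Rightarrow> 'a \<Rightarrow> 'a \<Rightarrow> 'a \<Rightarrow> nat \<Rightarrow> 'a \<Rightarrow> 'a" where
  "W a b c d 0 z = 1"
| "W a b c d (Suc 0) z = z"
| "W a b c d (Suc (Suc n)) z =
     (a * z + b) * W a b c d (Suc n) z + (c * z + d) * W a b c d n z"

definition xA :: "real \<Rightarrow> real \<Rightarrow> real" where
  "xA a b = - b / a"

definition xB :: "real \<Rightarrow> real \<Rightarrow> real" where
  "xB c d = - d / c"

definition DeltaD :: "real \<Rightarrow> real \<Rightarrow> real \<Rightarrow> real \<Rightarrow> real" where
  "DeltaD a b c d = c\<^sup>2 - a\<^sup>2 * (c * xA a b + d)"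

definition xD_minus :: "real \<Rightarrow> real \<Rightarrow> real \<Rightarrow> real \<Rightarrow> real" where
  "xD_minus a b c d = xA a b + (- 2 * c - 2 * sqrt (DeltaD a b c d)) / a\<^sup>2"

definition xD_plus :: "real \<Rightarrow> real \<Rightarrow> real \<Rightarrow> real \<Rightarrow> real" where
  "xD_plus a b c d = xA a b + (- 2 * c + 2 * sqrt (DeltaD a b c d)) / a\<^sup>2"

definition Deltag :: "real \<Rightarrow> real \<Rightarrow> real \<Rightarrow> real \<Rightarrow> real" where
  "Deltag a b c d = (b + c)\<^sup>2 + 4 * d * (1 - a)"

definition Fq :: "real \<Rightarrow> real \<Rightarrow> real \<Rightarrow> real \<Rightarrow> real" where
  "Fq a b c d = d * (a - 2)\<^sup>2 + b * c * (2 - a) + b\<^sup>2"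

text \<open>Zeros of g, taken in the complex numbers (complex square root), so that their
  realness is part of the claim.  Undefined when a = 1 and b + c = 0.\<close>
definition xg_minus :: "real \<Rightarrow> real \<Rightarrow> real \<Rightarrow> real \<Rightarrow> complex" where
  "xg_minus a b c d =
     (if a \<noteq> 1 then complex_of_real ((b + c) / (2 * (1 - a)))
                     - csqrt (complex_of_real (Deltag a b c d)) / complex_of_real (2 * \<bar>1 - a\<bar>)
      else if b + c \<noteq> 0 then complex_of_real (- d / (b + c)) else undefined)"

definition xg_plus :: "real \<Rightarrow> real \<Rightarrow> real \<Rightarrow> real \<Rightarrow> complex" where
  "xg_plus a b c d =
     (if a \<noteq> 1 then complex_of_real ((b + c) / (2 * (1 - a)))
                     + csqrt (complex_of_real (Deltag a b c d)) / complex_of_real (2 * \<bar>1 - a\<bar>)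
      else if b + c \<noteq> 0 then complex_of_real (- d / (b + c)) else undefined)"

definition uv :: "real \<Rightarrow> real \<Rightarrow> real \<Rightarrow> real \<Rightarrow> complex \<times> complex" where
  "uv a b c d =
     (if a < 2 \<and> Fq a b c d \<le> 0 then
        (complex_of_real (xD_minus a b c d), complex_of_real (xD_plus a b c d))
      else if a > 2 \<and> Fq a b c d < 0 then (xg_minus a b c d, xg_plus a b c d)
      else if a < 1 \<and> Fq a b c d > 0 then (xg_plus a b c d, complex_of_real (xD_plus a b c d))
      else (xg_minus a b c d, complex_of_real (xD_plus a b c d)))"

text \<open>z* is a limit of zeros of (W_n): there are zeros z_n of W_n (for all large n,
  since W_0 = 1 has no zeros) with z_n \<longrightarrow> z*.\<close>
definition limit_of_zeros :: "real \<Rightarrow> real \<Rightarrow> real \<Rightarrow> real \<Rightarrow> complex \<Rightarrow> bool" where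
  "limit_of_zeros a b c d zs \<longleftrightarrow>
     (\<exists>z :: nat \<Rightarrow> complex.
        (\<forall>\<^sub>F n in sequentially.
           W (complex_of_real a) (complex_of_real b) (complex_of_real c) (complex_of_real d) n (z n) = 0)
        \<and> z \<longlonglongrightarrow> zs)"

end

theory Submission
  imports Defs
begin


lemma W_of_real: "W (complex_of_real a) (of_real b) (of_real c) (of_real d) n (of_real x) = of_real (W a b c d n x)"
  by (induction a b c d n x rule: W.induct) auto

lemma W_cont: "continuous_on S (W a b c d n :: real \<Rightarrow> real)"
proof -
  have "continuous_on S (W a b c d n) \<and> continuous_on S (W a b c d (Suc n))"
  proof (induction n)
    case 0 then show ?case by (auto intro!: continuous_intros)
  next
    case (Suc n)
    then show ?case
      by (auto intro!: continuous_intros simp del: W.simps simp: W.simps(3)[abs_def])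
  qed
  then show ?thesis by blast
qed

lemma W_two_roots:
  fixes l1 l2 :: "'a::comm_ring_1"
  assumes "l1 + l2 = a*x+b" "l1*l2 = -(c*x+d)"
  shows "W a b c d n x * (l1 - l2) = (x - l2)*l1^n - (x - l1)*l2^n"
proof -
  have "W a b c d n x * (l1 - l2) = (x - l2)*l1^n - (x - l1)*l2^n \<and>
        W a b c d (Suc n) x * (l1 - l2) = (x - l2)*l1^(Suc n) - (x - l1)*l2^(Suc n)"
  proof (induction n)
    case 0 then show ?case by (simp add: algebra_simps)
  next
    case (Suc n)
    have e1: "a*x+b = l1+l2" and e2: "c*x+d = -(l1*l2)" using assms by simp_all
    have "W a b c d (Suc (Suc n)) x * (l1 - l2) = (l1+l2) * (W a b c d (Suc n) x * (l1 - l2)) - (l1*l2) * (W a b c d n x * (l1 - l2))"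
      by (simp only: W.simps e1 e2) (simp add: algebra_simps)
    also have "\<dots> = (l1+l2) * ((x - l2)*l1^(Suc n) - (x - l1)*l2^(Suc n)) - (l1*l2) * ((x - l2)*l1^n - (x - l1)*l2^n)"
      using Suc by simp
    also have "\<dots> = (x - l2)*l1^(Suc (Suc n)) - (x - l1)*l2^(Suc (Suc n))"
      by (simp add: algebra_simps)
    finally show ?case using Suc by simp
  qed
  then show ?thesis by blast
qed

lemma W_root:
  fixes x :: "'a::comm_ring_1"
  assumes "x^2 = (a*x+b)*x + (c*x+d)"
  shows "W a b c d n x = x^n"
proof -
  have "W a b c d n x = x^n \<and> W a b c d (Suc n) x = x^(Suc n)"
  proof (induction n)
    case 0 then show ?case by simp
  next
    case (Suc n)
    have "W a b c d (Suc (Suc n)) x = x^n * ((a*x+b)*x + (c*x+d))"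
      using Suc by (simp add: algebra_simps)
    also have "\<dots> = x^(Suc (Suc n))" using assms by (simp add: power2_eq_square algebra_simps)
    finally show ?case using Suc by simp
  qed
  then show ?thesis by blast
qed

lemma W_step:
  fixes l m :: "'a::comm_ring_1"
  assumes "l + m = a*x+b" "l*m = -(c*x+d)"
  shows "W a b c d (Suc n) x = m * W a b c d n x + l^n * (x - m)"
proof -
  have "W a b c d (Suc n) x - m * W a b c d n x = l^n * (x - m)"
  proof (induction n)
    case 0 then show ?case by simp
  next
    case (Suc n)
    have "W a b c d (Suc (Suc n)) x - m * W a b c d (Suc n) x
        = l * (W a b c d (Suc n) x - m * W a b c d n x)"
    proof -
      have e1: "a*x+b = l+m" and e2: "c*x+d = -(l*m)" using assms by simp_all
      show ?thesis by (simp only: W.simps e1 e2) (simp add: algebra_simps)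
    qed
    then show ?case using Suc by simp
  qed
  then show ?thesis by (simp add: algebra_simps)
qed



lemma sin_rec: "sin (real (Suc (Suc n)) * t) = 2 * cos t * sin (real (Suc n) * t) - sin (real n * t)"
proof -
  define u where "u = real (Suc n) * t"
  have e1: "real (Suc (Suc n)) * t = u + t" unfolding u_def by (simp add: algebra_simps)
  have e2: "real n * t = u - t" unfolding u_def by (simp add: algebra_simps)
  have "sin (u + t) + sin (u - t) = 2 * sin u * cos t" by (simp add: sin_add sin_diff)
  then show ?thesis unfolding e1 e2 u_def[symmetric] by (simp add: algebra_simps)
qed

lemma W_cheb:
  fixes a b c d x r t :: real
  assumes "a*x+b = 2*r*cos t" "c*x+d = -(r^2)"
  shows "W a b c d (Suc n) x * sin t = r^n * (x * sin (real (Suc n) * t) - r * sin (real n * t))"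
proof -
  have "W a b c d (Suc n) x * sin t = r^n * (x * sin (real (Suc n) * t) - r * sin (real n * t)) \<and>
        W a b c d (Suc (Suc n)) x * sin t = r^(Suc n) * (x * sin (real (Suc (Suc n)) * t) - r * sin (real (Suc n) * t))"
  proof (induction n)
    case 0
    have "sin (2*t) = 2 * sin t * cos t" by (rule sin_double)
    then show ?case using assms by (simp add: algebra_simps power2_eq_square)
  next
    case (Suc n)
    have "W a b c d (Suc (Suc (Suc n))) x * sin t = (2*r*cos t) * (W a b c d (Suc (Suc n)) x * sin t) - r^2 * (W a b c d (Suc n) x * sin t)"
      by (simp only: W.simps assms) (simp add: algebra_simps)
    also have "\<dots> = r^(Suc (Suc n)) * (x * sin (real (Suc (Suc (Suc n))) * t) - r * sin (real (Suc (Suc n)) * t))"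
      using Suc by (simp only: sin_rec[of "Suc n"] sin_rec[of n]) (simp add: algebra_simps power2_eq_square)
    finally show ?case using Suc by simp
  qed
  then show ?thesis by blast
qed

lemma cheb_neg:
  fixes a b c d x r :: real
  assumes "a*x+b = 2*r*cos (pi / real N)" "c*x+d = -(r^2)" "N \<ge> 2" "r > 0"
  shows "W a b c d N x < 0"
proof -
  obtain m where N: "N = Suc m" and m: "m \<ge> 1" using assms(3) by (cases N) auto
  let ?t = "pi / real N"
  have st: "sin ?t > 0" using assms(3) by (intro sin_gt_zero) (auto simp: field_simps)
  have "real (Suc m) * ?t = pi" using N by simp
  moreover have "real m * ?t = pi - ?t" using N by (simp add: field_simps)
  ultimately have "W a b c d N x * sin ?t = r^m * (- r * sin ?t)"
    using W_cheb[OF assms(1,2), of m] N by simp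
  then have "sin ?t * W a b c d N x = sin ?t * (-(r^N))" using N by (simp add: algebra_simps)
  then have "W a b c d N x = -(r^N)" using st by (metis mult_cancel_left order_less_irrefl)
  then show ?thesis using assms(4) by simp
qed

lemma cheb_neg2:
  fixes a b c d x r :: real
  assumes "a*x+b = - 2*r*cos (pi / real N)" "c*x+d = -(r^2)" "N \<ge> 2" "r > 0"
  shows "(-1)^N * W a b c d N x < 0"
proof -
  obtain m where N: "N = Suc m" and m: "m \<ge> 1" using assms(3) by (cases N) auto
  let ?s = "pi / real N"
  let ?t = "pi - ?s"
  have a1: "a*x+b = 2*r*cos ?t" using assms(1) by simp
  have st: "sin ?s > 0" using assms(3) by (intro sin_gt_zero) (auto simp: field_simps)
  have "real (Suc m) * ?t = real m * pi" using N by (simp add: field_simps)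
  then have s1: "sin (real (Suc m) * ?t) = 0" by simp
  have "real m * ?t = real m * pi - (pi - ?s)" using N by (simp add: field_simps)
  then have "sin (real m * ?t) = - ((-1)^m * sin (pi - ?s))"
    by (simp add: sin_diff)
  then have s2: "sin (real m * ?t) = - ((-1)^m * sin ?s)" by simp
  have "W a b c d N x * sin ?s = r^m * (r * ((-1)^m * sin ?s))"
    using W_cheb[OF a1 assms(2), of m] N s1 s2 by simp
  then have "sin ?s * W a b c d N x = sin ?s * (r^N * (-1)^m)" using N by (simp add: algebra_simps)
  then have "W a b c d N x = r^N * (-1)^m" using st by (metis mult_cancel_left order_less_irrefl)
  then have "(-1)^N * W a b c d N x = -(r^N)" using N by simp
  then show ?thesis using assms(4) by simp
qed

lemma ivt_sign:
  fixes f :: "real \<Rightarrow> real"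
  assumes "x1 \<le> x2" "f x1 * f x2 \<le> 0" "continuous_on {x1..x2} f"
  shows "\<exists>x. x1 \<le> x \<and> x \<le> x2 \<and> f x = 0"
proof (cases "f x1 < 0")
  case True
  then have "0 \<le> f x2" using assms(2) by (simp add: mult_le_0_iff)
  then show ?thesis using IVT'[of f x1 0 x2] True assms by auto
next
  case f: False
  show ?thesis
  proof (cases "f x1 = 0")
    case True then show ?thesis using assms by auto
  next
    case False
    then have "f x1 > 0" using f by simp
  then have "f x2 \<le> 0" using assms(2) by (simp add: mult_le_0_iff)
  then show ?thesis using IVT2'[of f x2 0 x1] \<open>f x1 > 0\<close> assms by auto
  qed
qed

lemma zeros_limit:
  fixes p :: real
  assumes H: "\<And>e. e > 0 \<Longrightarrow> eventually (\<lambda>n. \<exists>x. \<bar>x - p\<bar> < e \<and> W a b c d n x = 0) sequentially"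
  shows "limit_of_zeros a b c d (complex_of_real p)"
proof -
  define Z where "Z n = {x. W a b c d n x = 0}" for n
  define zs where "zs n = (if Z n \<noteq> {} then (SOME x. x \<in> Z n \<and> dist p x < infdist p (Z n) + 1/(real n+1)) else p)" for n
  have ex: "\<exists>x\<in>A. dist p x < infdist p A + e" if "A \<noteq> {}" "e > 0" for A :: "real set" and e
  proof (rule ccontr)
    assume "\<not> ?thesis"
    then have "\<forall>x\<in>A. infdist p A + e \<le> dist p x" by auto
    then have "infdist p A + e \<le> infdist p A"
      unfolding infdist_notempty[OF that(1)] by (intro cINF_greatest that(1)) auto
    then show False using that by simp
  qed
  have zsZ: "zs n \<in> Z n \<and> dist p (zs n) < infdist p (Z n) + 1/(real n+1)" if "Z n \<noteq> {}" for n
  proof -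
    have "\<exists>x. x \<in> Z n \<and> dist p x < infdist p (Z n) + 1/(real n+1)"
      using ex[OF that, of "1/(real n+1)"] by auto
    then have "(SOME x. x \<in> Z n \<and> dist p x < infdist p (Z n) + 1/(real n+1)) \<in> Z n \<and> dist p (SOME x. x \<in> Z n \<and> dist p x < infdist p (Z n) + 1/(real n+1)) < infdist p (Z n) + 1/(real n+1)"
      by (rule someI_ex)
    then show ?thesis unfolding zs_def using that by simp
  qed
  have ne: "eventually (\<lambda>n. Z n \<noteq> {}) sequentially"
  proof -
    have "eventually (\<lambda>n. \<exists>x. \<bar>x - p\<bar> < 1 \<and> W a b c d n x = 0) sequentially" using H[of 1] by simp
    then show ?thesis by eventually_elim (auto simp: Z_def)
  qed
  have lim: "zs \<longlonglongrightarrow> p"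
  proof (rule tendstoI)
    fix e :: real assume e: "e > 0"
    obtain N1 where N1: "\<And>n. n \<ge> N1 \<Longrightarrow> \<exists>x. \<bar>x - p\<bar> < e/2 \<and> W a b c d n x = 0"
      using H[of "e/2"] e unfolding eventually_sequentially by auto
    obtain N2 :: nat where N2: "real N2 > 2/e" using reals_Archimedean2 by blast
    show "eventually (\<lambda>n. dist (zs n) p < e) sequentially"
      unfolding eventually_sequentially
    proof (intro exI allI impI)
      fix n assume n: "n \<ge> max N1 N2"
      obtain x where x: "\<bar>x - p\<bar> < e/2" "W a b c d n x = 0" using N1[of n] n by auto
      have xZ: "x \<in> Z n" using x by (simp add: Z_def)
      then have Zne: "Z n \<noteq> {}" by auto
      have "infdist p (Z n) \<le> dist p x" by (rule infdist_le[OF xZ])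
      also have "\<dots> < e/2" using x by (simp add: dist_real_def abs_minus_commute)
      finally have i: "infdist p (Z n) < e/2" .
      have "real n \<ge> real N2" using n by simp
      then have "real n + 1 > 2/e" using N2 by simp
      then have "1/(real n+1) < e/2" using e by (simp add: field_simps)
      then show "dist (zs n) p < e" using zsZ[OF Zne] i by (simp add: dist_commute)
    qed
  qed
  show ?thesis unfolding limit_of_zeros_def
  proof (intro exI conjI)
    show "eventually (\<lambda>n. W (complex_of_real a) (complex_of_real b) (complex_of_real c) (complex_of_real d) n (complex_of_real (zs n)) = 0) sequentially"
      using ne by eventually_elim (use zsZ in \<open>auto simp: W_of_real Z_def\<close>)
    show "(\<lambda>n. complex_of_real (zs n)) \<longlonglongrightarrow> complex_of_real p"
      using lim by (rule tendsto_of_real)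
  qed
qed



lemma cos_pi_N_lim: "(\<lambda>N. cos (pi / real N)) \<longlonglongrightarrow> 1"
proof -
  have "(\<lambda>N. pi / real N) \<longlonglongrightarrow> 0" by (rule lim_const_over_n)
  then have "(\<lambda>N. cos (pi / real N)) \<longlonglongrightarrow> cos 0" by (intro tendsto_cos)
  then show ?thesis by simp
qed

lemma lim_right_end:
  fixes a b c d p q e :: real
  assumes pos: "\<And>n. W a b c d n p > 0"
    and qp: "q < p"
    and AB: "\<And>x. q \<le> x \<Longrightarrow> x \<le> p \<Longrightarrow> c*x+d < 0 \<and> a*x+b > 0"
    and D: "\<And>x. q \<le> x \<Longrightarrow> x < p \<Longrightarrow> (a*x+b)^2 + 4*(c*x+d) < 0"
    and Dp: "(a*p+b)^2 + 4*(c*p+d) = 0"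
    and e: "e > 0"
  shows "eventually (\<lambda>n. \<exists>x. \<bar>x - p\<bar> < e \<and> W a b c d n x = 0) sequentially"
proof -
  define x1 where "x1 = max q (p - e/2)"
  have x1: "q \<le> x1" "x1 < p" "p - x1 < e" using qp e by (auto simp: x1_def)
  define Q where "Q x = (a*x+b) / (2 * sqrt (-(c*x+d)))" for x
  have Q1: "Q x1 < 1"
  proof -
    have A: "a*x1+b > 0" "c*x1+d < 0" using AB x1 by auto
    have sq: "(a*x1+b)^2 < (2 * sqrt (-(c*x1+d)))^2" using D[of x1] x1 A by (simp add: power_mult_distrib)
    have "0 \<le> 2 * sqrt (-(c*x1+d))" using A by simp
    from power_less_imp_less_base[OF sq this] have "a*x1+b < 2 * sqrt (-(c*x1+d))" .
    then show ?thesis using A by (simp add: Q_def)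
  qed
  have Qp: "Q p = 1"
  proof -
    have A: "a*p+b > 0" "c*p+d < 0" using AB qp by auto
    have sq: "(a*p+b)^2 = 4 * (-(c*p+d))" using Dp by linarith
    have "a*p+b = sqrt ((a*p+b)^2)" using A by simp
    also have "\<dots> = sqrt (4 * (-(c*p+d)))" by (simp only: sq)
    also have "\<dots> = 2 * sqrt (-(c*p+d))" by (metis real_sqrt_mult real_sqrt_four)
    finally show ?thesis using A by (simp add: Q_def)
  qed
  have nz: "\<forall>x\<in>{x1..p}. 2 * sqrt (-(c*x+d)) \<noteq> 0"
  proof
    fix x assume "x \<in> {x1..p}"
    then have "c*x+d < 0" using AB x1 by auto
    then show "2 * sqrt (-(c*x+d)) \<noteq> 0" by simp
  qed
  have contQ: "continuous_on {x1..p} Q"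
    unfolding Q_def by (rule continuous_on_divide[OF _ _ nz]) (intro continuous_intros)+
  have ev: "eventually (\<lambda>N. Q x1 < cos (pi / real N) \<and> N \<ge> 2) sequentially"
    using order_tendstoD(1)[OF cos_pi_N_lim Q1] eventually_ge_at_top[of 2]
    by eventually_elim auto
  show ?thesis
    using ev
  proof eventually_elim
    case (elim N)
    have "\<exists>y. x1 \<le> y \<and> y \<le> p \<and> Q y = cos (pi / real N)"
      using elim Qp x1 by (intro IVT'[OF _ _ _ contQ]) auto
    then obtain y where y: "x1 \<le> y" "y \<le> p" "Q y = cos (pi / real N)" by blast
    have B: "c*y+d < 0" "a*y+b > 0" using AB[of y] y x1 by auto
    define r where "r = sqrt (-(c*y+d))"
    have r: "r > 0" using B by (simp add: r_def)
    have Ay: "a*y+b = 2*r*cos (pi / real N)" using y(3) r by (simp add: Q_def r_def field_simps)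
    have By: "c*y+d = -(r^2)" using B by (simp add: r_def)
    have neg: "W a b c d N y < 0" using cheb_neg[OF Ay By _ r] elim by simp
    have "\<exists>z. y \<le> z \<and> z \<le> p \<and> W a b c d N z = 0"
      using neg pos[of N] y
      by (intro ivt_sign W_cont) (auto simp: mult_le_0_iff)
    then obtain z where "y \<le> z" "z \<le> p" "W a b c d N z = 0" by blast
    then show ?case using x1 y by (intro exI[of _ z]) auto
  qed
qed

lemma lim_left_end:
  fixes a b c d p q e :: real
  assumes pos: "\<And>n. (-1)^n * W a b c d n p > 0"
    and qp: "p < q"
    and AB: "\<And>x. p \<le> x \<Longrightarrow> x \<le> q \<Longrightarrow> c*x+d < 0 \<and> a*x+b < 0"
    and D: "\<And>x. p < x \<Longrightarrow> x \<le> q \<Longrightarrow> (a*x+b)^2 + 4*(c*x+d) < 0"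
    and Dp: "(a*p+b)^2 + 4*(c*p+d) = 0"
    and e: "e > 0"
  shows "eventually (\<lambda>n. \<exists>x. \<bar>x - p\<bar> < e \<and> W a b c d n x = 0) sequentially"
proof -
  define x1 where "x1 = min q (p + e/2)"
  have x1: "x1 \<le> q" "p < x1" "x1 - p < e" using qp e by (auto simp: x1_def)
  define Q where "Q x = (a*x+b) / (2 * sqrt (-(c*x+d)))" for x
  have Q1: "-1 < Q x1"
  proof -
    have A: "a*x1+b < 0" "c*x1+d < 0" using AB x1 by auto
    have "(-(a*x1+b))^2 = (a*x1+b)^2" by (rule power2_minus)
    also have "\<dots> < (2 * sqrt (-(c*x1+d)))^2" using D[of x1] x1 A by (simp add: power_mult_distrib)
    finally have "(-(a*x1+b))^2 < (2 * sqrt (-(c*x1+d)))^2" .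
    moreover have "0 \<le> 2 * sqrt (-(c*x1+d))" using A by simp
    ultimately have "-(a*x1+b) < 2 * sqrt (-(c*x1+d))" by (rule power_less_imp_less_base)
    then show ?thesis using A by (simp add: Q_def field_simps)
  qed
  have Qp: "Q p = -1"
  proof -
    have A: "a*p+b < 0" "c*p+d < 0" using AB qp by auto
    have sq: "(a*p+b)^2 = 4 * (-(c*p+d))" using Dp by linarith
    have "-(a*p+b) = sqrt ((a*p+b)^2)" using A by simp
    also have "\<dots> = sqrt (4 * (-(c*p+d)))" by (simp only: sq)
    also have "\<dots> = 2 * sqrt (-(c*p+d))" by (metis real_sqrt_mult real_sqrt_four)
    finally show ?thesis using A by (simp add: Q_def field_simps)
  qed
  have nz: "\<forall>x\<in>{p..x1}. 2 * sqrt (-(c*x+d)) \<noteq> 0"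
  proof
    fix x assume "x \<in> {p..x1}"
    then have "c*x+d < 0" using AB x1 by auto
    then show "2 * sqrt (-(c*x+d)) \<noteq> 0" by simp
  qed
  have contQ: "continuous_on {p..x1} Q"
    unfolding Q_def by (rule continuous_on_divide[OF _ _ nz]) (intro continuous_intros)+
  have e1: "eventually (\<lambda>N. - Q x1 < cos (pi / real N)) sequentially"
    by (rule order_tendstoD(1)[OF cos_pi_N_lim]) (use Q1 in simp)
  have ev: "eventually (\<lambda>N. - Q x1 < cos (pi / real N) \<and> N \<ge> 2) sequentially"
    using e1 eventually_ge_at_top[of 2]
    by eventually_elim auto
  show ?thesis
    using ev
  proof eventually_elim
    case (elim N)
    have "\<exists>y. p \<le> y \<and> y \<le> x1 \<and> Q y = - cos (pi / real N)"
      using elim Qp x1 by (intro IVT'[OF _ _ _ contQ]) auto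
    then obtain y where y: "p \<le> y" "y \<le> x1" "Q y = - cos (pi / real N)" by blast
    have B: "c*y+d < 0" "a*y+b < 0" using AB[of y] y x1 by auto
    define r where "r = sqrt (-(c*y+d))"
    have r: "r > 0" using B by (simp add: r_def)
    have Ay: "a*y+b = - 2*r*cos (pi / real N)" using y(3) r by (simp add: Q_def r_def field_simps)
    have By: "c*y+d = -(r^2)" using B by (simp add: r_def)
    have neg: "(-1)^N * W a b c d N y < 0" using cheb_neg2[OF Ay By _ r] elim by simp
    have "\<exists>z. p \<le> z \<and> z \<le> y \<and> (-1)^N * W a b c d N z = 0"
    proof (rule ivt_sign[of p y "\<lambda>z. (-1)^N * W a b c d N z"])
      show "p \<le> y" using y by simp
      show "((-1)^N * W a b c d N p) * ((-1)^N * W a b c d N y) \<le> 0"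
        using mult_pos_neg[OF pos[of N] neg] by simp
      show "continuous_on {p..y} (\<lambda>z. (-1)^N * W a b c d N z)"
        by (intro continuous_intros W_cont)
    qed
    then obtain z where "p \<le> z" "z \<le> y" "(-1)^N * W a b c d N z = 0" by blast
    then show ?case using x1 y by (intro exI[of _ z]) auto
  qed
qed



lemma sign_change_seq:
  fixes r1 r2 f1 f2 k1 k2 :: real
  assumes "\<bar>r1\<bar> < 1" "\<bar>r2\<bar> < 1" "f1*f2 < 0"
  shows "eventually (\<lambda>n. (f1 - k1*r1^n)*(f2 - k2*r2^n) < 0) sequentially"
proof -
  have "(\<lambda>n. r1^n) \<longlonglongrightarrow> 0" "(\<lambda>n. r2^n) \<longlonglongrightarrow> 0"
    using LIMSEQ_power_zero[of r1] LIMSEQ_power_zero[of r2] assms by auto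
  then have "(\<lambda>n. (f1 - k1*r1^n)*(f2 - k2*r2^n)) \<longlonglongrightarrow> (f1 - k1*0)*(f2 - k2*0)"
    using assms by (intro tendsto_intros) auto
  then show ?thesis using assms(3) by (intro order_tendstoD(2)) auto
qed

lemma W_dom_form:
  fixes l1 l2 x :: real
  assumes "l1 + l2 = a*x+b" "l1*l2 = -(c*x+d)" "l1 \<noteq> 0"
  shows "W a b c d n x * (l1 - l2) = l1^n * ((x - l2) - (x - l1) * (l2/l1)^n)"
proof -
  have "l1^n * (l2/l1)^n = l2^n" using assms(3) by (simp add: power_divide)
  then show ?thesis using W_two_roots[OF assms(1,2), of n] by (simp add: algebra_simps)
qed

lemma lim_groot:
  fixes a b c d p sg e :: real
  assumes sg: "sg = 1 \<or> sg = -1"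
    and root: "p^2 = (a*p+b)*p + (c*p+d)"
    and dom1: "sg*(a*p+b) < 2 * sg * p"
    and dom2: "sg*(a*p+b) < 0"
    and h: "2*(1-a)*p - (b+c) \<noteq> 0"
    and e: "e > 0"
  shows "eventually (\<lambda>n. \<exists>x. \<bar>x - p\<bar> < e \<and> W a b c d n x = 0) sequentially"
proof -
  define Dl where "Dl x = (a*x+b)^2 + 4*(c*x+d)" for x
  define l1 where "l1 x = ((a*x+b) - sg * sqrt (Dl x)) / 2" for x
  define l2 where "l2 x = ((a*x+b) + sg * sqrt (Dl x)) / 2" for x
  define hh where "hh x = (1-a)*(x+p) - (b+c)" for x
  define psi where "psi x = hh x * (x - l1 x)" for x
  have s2: "sg * sg = 1" using sg by auto
  have Dlp: "Dl p = ((a*p+b) - 2*p)^2" using root unfolding Dl_def by (simp add: power2_eq_square algebra_simps)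
  have sq: "sg * sqrt (Dl p) = 2*p - (a*p+b)"
    using sg dom1 unfolding Dlp by auto
  have l2p: "l2 p = p" using sq by (simp add: l2_def)
  have l1p: "l1 p = (a*p+b) - p" using sq by (simp add: l1_def)
  have Dlpos: "Dl p > 0" using sg dom1 unfolding Dlp by auto
  have absl: "\<bar>l2 p\<bar> < \<bar>l1 p\<bar>" unfolding l1p l2p using sg dom1 dom2 by auto
  have psip: "psi p \<noteq> 0"
  proof -
    have "psi p = (2*(1-a)*p - (b+c)) * (2*p - (a*p+b))" by (simp add: psi_def hh_def l1p algebra_simps)
    moreover have "2*p - (a*p+b) \<noteq> 0" using sg dom1 by auto
    ultimately show ?thesis using h by simp
  qed
  have l1p0: "l1 p \<noteq> 0" using absl by auto
  have tD: "(Dl \<longlongrightarrow> Dl p) (at p)" unfolding Dl_def by (intro tendsto_intros)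
  have t1: "(l1 \<longlongrightarrow> l1 p) (at p)" unfolding l1_def by (intro tendsto_intros tD) simp
  have t2: "(l2 \<longlongrightarrow> l2 p) (at p)" unfolding l2_def by (intro tendsto_intros tD) simp
  have tpsi: "(psi \<longlongrightarrow> psi p) (at p)" unfolding psi_def hh_def by (intro tendsto_intros t1)
  have E1: "eventually (\<lambda>x. Dl x > 0) (at p)" by (rule order_tendstoD(1)[OF tD Dlpos])
  have E2: "eventually (\<lambda>x. \<bar>l1 x\<bar> - \<bar>l2 x\<bar> > 0) (at p)"
    by (rule order_tendstoD(1)[OF tendsto_diff[OF tendsto_rabs[OF t1] tendsto_rabs[OF t2]]]) (use absl in simp)
  have E3: "eventually (\<lambda>x. l1 x * l1 p > 0) (at p)"
    by (rule order_tendstoD(1)[OF tendsto_mult[OF t1 tendsto_const]]) (use l1p0 in \<open>metis mult_neg_neg mult_pos_pos linorder_neq_iff\<close>)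
  have E4: "eventually (\<lambda>x. psi x * psi p > 0) (at p)"
    by (rule order_tendstoD(1)[OF tendsto_mult[OF tpsi tendsto_const]]) (use psip in \<open>metis mult_neg_neg mult_pos_pos linorder_neq_iff\<close>)
  have "eventually (\<lambda>x. Dl x > 0 \<and> \<bar>l1 x\<bar> - \<bar>l2 x\<bar> > 0 \<and> l1 x * l1 p > 0 \<and> psi x * psi p > 0) (at p)"
    using E1 E2 E3 E4 by eventually_elim auto
  then obtain \<delta> where \<delta>: "\<delta> > 0"
    and P: "\<And>x. x \<noteq> p \<Longrightarrow> dist x p < \<delta> \<Longrightarrow> Dl x > 0 \<and> \<bar>l1 x\<bar> - \<bar>l2 x\<bar> > 0 \<and> l1 x * l1 p > 0 \<and> psi x * psi p > 0"
    unfolding eventually_at by auto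
  define k where "k = min e \<delta> / 2"
  have k: "k > 0" "k < e" "k < \<delta>" using e \<delta> by (auto simp: k_def)
  define x1 where "x1 = p - k"
  define x2 where "x2 = p + k"
  have P1: "Dl x1 > 0 \<and> \<bar>l1 x1\<bar> - \<bar>l2 x1\<bar> > 0 \<and> l1 x1 * l1 p > 0 \<and> psi x1 * psi p > 0"
    using k by (intro P) (auto simp: x1_def dist_real_def)
  have P2: "Dl x2 > 0 \<and> \<bar>l1 x2\<bar> - \<bar>l2 x2\<bar> > 0 \<and> l1 x2 * l1 p > 0 \<and> psi x2 * psi p > 0"
    using k by (intro P) (auto simp: x2_def dist_real_def)
  have gen: "l1 x + l2 x = a*x+b \<and> l1 x * l2 x = -(c*x+d) \<and>
       (x - l2 x) * (x - l1 x)^2 = (x - p) * psi x" if "Dl x > 0" for x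
  proof -
    have sqD: "sqrt (Dl x) ^ 2 = Dl x" using that by simp
    have sum: "l1 x + l2 x = a*x+b" by (simp add: l1_def l2_def field_simps)
    have prod: "l1 x * l2 x = -(c*x+d)"
    proof -
      have "l1 x * l2 x = ((a*x+b)^2 - (sg * sg) * (sqrt (Dl x))^2) / 4"
        by (simp add: l1_def l2_def power2_eq_square algebra_simps)
      also have "\<dots> = -(c*x+d)" using s2 sqD by (simp add: Dl_def)
      finally show ?thesis .
    qed
    have g0: "(x - l1 x) * (x - l2 x) = x^2 - (l1 x + l2 x)*x + l1 x * l2 x"
      by (simp add: power2_eq_square algebra_simps)
    have g1: "(x - l1 x) * (x - l2 x) = x^2 - (a*x+b)*x - (c*x+d)"
      unfolding g0 sum prod by simp
    have g2: "x^2 - (a*x+b)*x - (c*x+d) = (x - p) * hh x"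
      using root by (simp add: hh_def power2_eq_square algebra_simps)
    have "(x - l2 x) * (x - l1 x)^2 = ((x - l1 x) * (x - l2 x)) * (x - l1 x)"
      by (simp add: power2_eq_square algebra_simps)
    also have "\<dots> = (x - p) * psi x" unfolding g1 g2 psi_def by (simp add: algebra_simps)
    finally show ?thesis using sum prod by simp
  qed
  obtain S1 R1 where G1: "l1 x1 + l2 x1 = a*x1+b" "l1 x1 * l2 x1 = -(c*x1+d)"
      "(x1 - l2 x1) * (x1 - l1 x1)^2 = (x1 - p) * psi x1" using gen[of x1] P1 by auto
  obtain S2 R2 where G2: "l1 x2 + l2 x2 = a*x2+b" "l1 x2 * l2 x2 = -(c*x2+d)"
      "(x2 - l2 x2) * (x2 - l1 x2)^2 = (x2 - p) * psi x2" using gen[of x2] P2 by auto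
  have psi12: "psi x1 * psi x2 > 0"
  proof -
    have "(psi x1 * psi p) * (psi x2 * psi p) > 0" using P1 P2 by simp
    then have "(psi x1 * psi x2) * (psi p * psi p) > 0" by (simp add: algebra_simps)
    then show ?thesis using psip by (simp add: zero_less_mult_iff)
  qed
  have psi1: "psi x1 \<noteq> 0" "psi x2 \<noteq> 0" using psi12 by auto
  have nz1: "x1 - l1 x1 \<noteq> 0" using psi1 by (auto simp: psi_def)
  have nz2: "x2 - l1 x2 \<noteq> 0" using psi1 by (auto simp: psi_def)
  have phi: "(x1 - l2 x1) * (x2 - l2 x2) < 0"
  proof -
    have "((x1 - l2 x1) * (x2 - l2 x2)) * ((x1 - l1 x1)^2 * (x2 - l1 x2)^2)
        = ((x1 - l2 x1) * (x1 - l1 x1)^2) * ((x2 - l2 x2) * (x2 - l1 x2)^2)" by (simp add: algebra_simps)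
    also have "\<dots> = - (k*k) * (psi x1 * psi x2)" unfolding G1(3) G2(3) by (simp add: x1_def x2_def algebra_simps)
    also have "\<dots> < 0" using k psi12 by (simp add: mult_pos_pos)
    finally have "((x1 - l2 x1) * (x2 - l2 x2)) * ((x1 - l1 x1)^2 * (x2 - l1 x2)^2) < 0" .
    moreover have "(x1 - l1 x1)^2 * (x2 - l1 x2)^2 > 0" using nz1 nz2 by simp
    ultimately show ?thesis by (simp add: mult_less_0_iff)
  qed
  have l1nz: "l1 x1 \<noteq> 0" "l1 x2 \<noteq> 0" using P1 P2 by auto
  have r1: "\<bar>l2 x1 / l1 x1\<bar> < 1" using P1 l1nz by (simp add: abs_divide)
  have r2: "\<bar>l2 x2 / l1 x2\<bar> < 1" using P2 l1nz by (simp add: abs_divide)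
  have l12: "l1 x1 * l1 x2 > 0"
  proof -
    have "(l1 x1 * l1 p) * (l1 x2 * l1 p) > 0" using P1 P2 by simp
    then have "(l1 x1 * l1 x2) * (l1 p * l1 p) > 0" by (simp add: algebra_simps)
    then show ?thesis using l1p0 by (simp add: zero_less_mult_iff)
  qed
  have D12: "(l1 x1 - l2 x1) * (l1 x2 - l2 x2) > 0"
  proof -
    have e1: "l1 x1 - l2 x1 = - sg * sqrt (Dl x1)" and e2: "l1 x2 - l2 x2 = - sg * sqrt (Dl x2)"
      by (simp_all add: l1_def l2_def field_simps)
    have "(l1 x1 - l2 x1) * (l1 x2 - l2 x2) = (sg * sg) * (sqrt (Dl x1) * sqrt (Dl x2))"
      by (simp only: e1 e2) (simp add: algebra_simps)
    then show ?thesis using s2 P1 P2 by simp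
  qed
  show ?thesis
    using sign_change_seq[OF r1 r2 phi, of "x1 - l1 x1" "x2 - l1 x2"]
  proof eventually_elim
    case (elim n)
    let ?T = "((x1 - l2 x1) - (x1 - l1 x1) * (l2 x1 / l1 x1)^n) * ((x2 - l2 x2) - (x2 - l1 x2) * (l2 x2 / l1 x2)^n)"
    have "(W a b c d n x1 * W a b c d n x2) * ((l1 x1 - l2 x1) * (l1 x2 - l2 x2))
        = (W a b c d n x1 * (l1 x1 - l2 x1)) * (W a b c d n x2 * (l1 x2 - l2 x2))" by (simp add: algebra_simps)
    also have "\<dots> = (l1 x1 * l1 x2)^n * ?T"
      unfolding W_dom_form[OF G1(1,2) l1nz(1)] W_dom_form[OF G2(1,2) l1nz(2)]
      by (simp add: power_mult_distrib algebra_simps)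
    also have "\<dots> < 0" using elim l12 by (simp add: mult_pos_neg)
    finally have "(W a b c d n x1 * W a b c d n x2) * ((l1 x1 - l2 x1) * (l1 x2 - l2 x2)) < 0" .
    then have WW: "W a b c d n x1 * W a b c d n x2 \<le> 0"
      using D12 mult_pos_pos[of "W a b c d n x1 * W a b c d n x2" "(l1 x1 - l2 x1) * (l1 x2 - l2 x2)"] by linarith
    have "\<exists>z. x1 \<le> z \<and> z \<le> x2 \<and> W a b c d n z = 0"
      using WW k by (intro ivt_sign W_cont) (auto simp: x1_def x2_def)
    then obtain z where "x1 \<le> z" "z \<le> x2" "W a b c d n z = 0" by blast
    then show ?case using k by (intro exI[of _ z]) (auto simp: x1_def x2_def)
  qed
qed



lemma basics:
  fixes a b c d :: real
  assumes a: "a>0" and c: "c>0" and b: "b<0" and d: "d<0" and AB: "xA a b < xB c d"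
  shows "0 < xA a b" "c * xA a b + d < 0" "xD_minus a b c d < xA a b" "xA a b < xD_plus a b c d"
    "xD_plus a b c d < xB c d"
    "\<And>x. (a*x+b)^2 + 4*(c*x+d) = a^2 * (x - xD_minus a b c d) * (x - xD_plus a b c d)"
    "a * xA a b + b = 0"
proof -
  define t where "t = xA a b"
  define S where "S = sqrt (DeltaD a b c d)"
  have bt: "b = - a * t" using a by (simp add: t_def xA_def)
  show t0: "0 < xA a b" using a b by (simp add: xA_def divide_neg_pos)
  show Bt: "c * xA a b + d < 0"
  proof -
    have "c * xA a b < c * xB c d" using AB c by simp
    also have "c * xB c d = -d" using c by (simp add: xB_def)
    finally show ?thesis by simp
  qed
  have DD: "DeltaD a b c d = c^2 - a^2 * (c*t + d)" by (simp add: DeltaD_def t_def)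
  have DDg: "DeltaD a b c d > c^2" using DD Bt a unfolding t_def by (simp add: mult_pos_neg)
  have DD0: "DeltaD a b c d \<ge> 0" using DDg zero_le_power2[of c] by linarith
  have S2: "S^2 = c^2 - a^2 * (c*t + d)" using DD0 DD by (simp add: S_def)
  have Sc: "S > c"
  proof -
    have "sqrt (c^2) < S" unfolding S_def using DDg by (intro real_sqrt_less_mono)
    then show ?thesis using c by simp
  qed
  have xm: "xD_minus a b c d = t - 2*(c + S)/a^2" using a by (simp add: xD_minus_def t_def S_def field_simps)
  have xp: "xD_plus a b c d = t + 2*(S - c)/a^2" using a by (simp add: xD_plus_def t_def S_def field_simps)
  show "xD_minus a b c d < xA a b" unfolding xm t_def using a c Sc by (simp add: field_simps)
  show "xA a b < xD_plus a b c d" unfolding xp t_def using a c Sc by (simp add: field_simps)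
  show fac: "\<And>x. (a*x+b)^2 + 4*(c*x+d) = a^2 * (x - xD_minus a b c d) * (x - xD_plus a b c d)"
  proof -
    fix x
    have "a^2 * (x - xD_minus a b c d) * (x - xD_plus a b c d)
        = a^2 * (x - t)^2 + 4*c*(x-t) + 4*(c^2 - S^2)/a^2"
      unfolding xm xp using a by (simp add: field_simps power2_eq_square)
    also have "\<dots> = (a*x+b)^2 + 4*(c*x+d)" unfolding S2 bt using a by (simp add: field_simps power2_eq_square)
    finally show "(a*x+b)^2 + 4*(c*x+d) = a^2 * (x - xD_minus a b c d) * (x - xD_plus a b c d)" by simp
  qed
  show at: "a * xA a b + b = 0" using a by (simp add: xA_def)
  show "xD_plus a b c d < xB c d"
  proof -
    let ?x = "xB c d"
    have B0: "c * ?x + d = 0" using c by (simp add: xB_def)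
    have "a * ?x + b > 0" using AB a at by (smt (verit) mult_strict_left_mono)
    then have "0 < (a * ?x + b)^2 + 4*(c * ?x + d)" using B0 by simp
    also have "\<dots> = a^2 * (?x - xD_minus a b c d) * (?x - xD_plus a b c d)" by (rule fac)
    finally have pos: "0 < a^2 * (?x - xD_minus a b c d) * (?x - xD_plus a b c d)" .
    have "?x - xD_minus a b c d > 0" using AB \<open>xD_minus a b c d < xA a b\<close> by simp
    then have h1: "a^2 * (?x - xD_minus a b c d) > 0" using a by simp
    show ?thesis using pos h1 zero_less_mult_iff[of "a^2 * (?x - xD_minus a b c d)" "?x - xD_plus a b c d"] by linarith
  qed
qed



lemma pos_double_v:
  fixes l x :: real
  assumes "l + l = a*x+b" "l*l = -(c*x+d)" "0 < l" "l \<le> x"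
  shows "W a b c d n x > 0"
proof (induction n)
  case 0 then show ?case by simp
next
  case (Suc n)
  have "W a b c d (Suc n) x = l * W a b c d n x + l^n * (x - l)" by (rule W_step[OF assms(1,2)])
  moreover have "l * W a b c d n x > 0" using Suc assms(3) by simp
  moreover have "l^n * (x - l) \<ge> 0" using assms(3,4) by simp
  ultimately show ?case by linarith
qed

lemma pos_double_u:
  fixes l x :: real
  assumes "l + l = a*x+b" "l*l = -(c*x+d)" "l < 0" "x \<le> l"
  shows "(-1)^n * W a b c d n x > 0"
proof (induction n)
  case 0 then show ?case by simp
next
  case (Suc n)
  have eq: "W a b c d (Suc n) x = l * W a b c d n x + l^n * (x - l)" by (rule W_step[OF assms(1,2)])
  have e: "(-l)^n = (-1)^n * l^n" by (rule power_minus)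
  have "(-1)^(Suc n) * W a b c d (Suc n) x = (-l) * ((-1)^n * W a b c d n x) + (-l)^n * (l - x)"
    by (simp only: eq e) (simp add: algebra_simps)
  moreover have "(-l) * ((-1)^n * W a b c d n x) > 0" using Suc assms(3) by (simp add: mult_neg_pos)
  moreover have "(-l)^n * (l - x) \<ge> 0" using assms(3,4) by simp
  ultimately show ?case by linarith
qed

context
  fixes a b c d :: real
  assumes a: "a>0" and c: "c>0" and b: "b<0" and d: "d<0" and AB: "xA a b < xB c d"
begin

lemma Dl_fac: "(a*x+b)^2 + 4*(c*x+d) = a^2 * (x - xD_minus a b c d) * (x - xD_plus a b c d)"
  using basics[OF a c b d AB] by blast

lemma B_neg: "x < xB c d \<Longrightarrow> c*x+d < 0"
proof -
  assume "x < xB c d"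
  then have "c*x < c * xB c d" using c by simp
  also have "c * xB c d = -d" using c by (simp add: xB_def)
  finally show "c*x+d < 0" by simp
qed

lemma A_sign: "a*x+b > 0 \<longleftrightarrow> x > xA a b" "a*x+b < 0 \<longleftrightarrow> x < xA a b"
proof -
  have e: "a*x+b = a*(x - xA a b)" using a by (simp add: xA_def algebra_simps)
  show "a*x+b > 0 \<longleftrightarrow> x > xA a b" unfolding e using a by (simp add: zero_less_mult_iff)
  show "a*x+b < 0 \<longleftrightarrow> x < xA a b" unfolding e using a by (simp add: mult_less_0_iff)
qed

lemma Dl_neg: "xD_minus a b c d < x \<Longrightarrow> x < xD_plus a b c d \<Longrightarrow> (a*x+b)^2 + 4*(c*x+d) < 0"
  unfolding Dl_fac using a by (simp add: mult_pos_neg)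

lemma Dl_le0: "(a*x+b)^2 + 4*(c*x+d) \<le> 0 \<Longrightarrow> xD_minus a b c d \<le> x \<and> x \<le> xD_plus a b c d"
proof -
  assume h: "(a*x+b)^2 + 4*(c*x+d) \<le> 0"
  have m: "xD_minus a b c d < xD_plus a b c d" using basics[OF a c b d AB] by linarith
  have "a^2 * ((x - xD_minus a b c d) * (x - xD_plus a b c d)) \<le> 0" using h unfolding Dl_fac by (simp add: mult.assoc)
  then have "(x - xD_minus a b c d) * (x - xD_plus a b c d) \<le> 0" using a by (simp add: mult_le_0_iff)
  then show ?thesis using m by (auto simp: mult_le_0_iff)
qed

lemma Dl_lt0: "(a*x+b)^2 + 4*(c*x+d) < 0 \<Longrightarrow> xD_minus a b c d < x \<and> x < xD_plus a b c d"
proof -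
  assume h: "(a*x+b)^2 + 4*(c*x+d) < 0"
  have m: "xD_minus a b c d < xD_plus a b c d" using basics[OF a c b d AB] by linarith
  have "a^2 * ((x - xD_minus a b c d) * (x - xD_plus a b c d)) < 0" using h unfolding Dl_fac by (simp add: mult.assoc)
  then have "(x - xD_minus a b c d) * (x - xD_plus a b c d) < 0" using a by (simp add: mult_less_0_iff)
  then show ?thesis using m by (auto simp: mult_less_0_iff)
qed

lemma end_v:
  assumes "(2-a) * xD_plus a b c d \<ge> b"
  shows "(\<forall>n. W a b c d n (xD_plus a b c d) > 0) \<and> limit_of_zeros a b c d (complex_of_real (xD_plus a b c d))"
proof -
  note bs = basics[OF a c b d AB]
  define p where "p = xD_plus a b c d"
  define l where "l = (a*p+b)/2"
  have Dp: "(a*p+b)^2 + 4*(c*p+d) = 0" unfolding Dl_fac p_def by simp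
  have l0: "l > 0" using A_sign(1)[of p] bs by (simp add: l_def p_def)
  have ll: "l*l = -(c*p+d)" using Dp by (simp add: l_def power2_eq_square field_simps)
  have lp: "l \<le> p" using assms by (simp add: l_def p_def algebra_simps)
  have pos: "\<And>n. W a b c d n p > 0" by (rule pos_double_v[OF _ ll l0 lp]) (simp add: l_def)
  define q where "q = (xA a b + p)/2"
  have qp: "q < p" "xA a b < q" using bs by (auto simp: q_def p_def)
  have lim: "limit_of_zeros a b c d (complex_of_real p)"
  proof (rule zeros_limit)
    fix e :: real assume e: "e > 0"
    show "eventually (\<lambda>n. \<exists>x. \<bar>x - p\<bar> < e \<and> W a b c d n x = 0) sequentially"
    proof (rule lim_right_end[OF pos qp(1) _ _ Dp e])
      fix x assume x: "q \<le> x" "x \<le> p"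
      show "c*x+d < 0 \<and> a*x+b > 0"
        using B_neg[of x] A_sign(1)[of x] x qp bs by (auto simp: p_def)
    next
      fix x assume x: "q \<le> x" "x < p"
      show "(a*x+b)^2 + 4*(c*x+d) < 0" using Dl_neg[of x] x qp bs by (auto simp: p_def)
    qed
  qed
  show ?thesis using pos lim by (simp add: p_def)
qed

lemma end_u:
  assumes "(2-a) * xD_minus a b c d \<le> b"
  shows "(\<forall>n. (-1)^n * W a b c d n (xD_minus a b c d) > 0) \<and> limit_of_zeros a b c d (complex_of_real (xD_minus a b c d))"
proof -
  note bs = basics[OF a c b d AB]
  define p where "p = xD_minus a b c d"
  define l where "l = (a*p+b)/2"
  have Dp: "(a*p+b)^2 + 4*(c*p+d) = 0" unfolding Dl_fac p_def by simp
  have l0: "l < 0" using A_sign(2)[of p] bs by (simp add: l_def p_def)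
  have ll: "l*l = -(c*p+d)" using Dp by (simp add: l_def power2_eq_square field_simps)
  have lp: "p \<le> l" using assms by (simp add: l_def p_def algebra_simps)
  have pos: "\<And>n. (-1)^n * W a b c d n p > 0" by (rule pos_double_u[OF _ ll l0 lp]) (simp add: l_def)
  define q where "q = (xA a b + p)/2"
  have qp: "p < q" "q < xA a b" using bs by (auto simp: q_def p_def)
  have lim: "limit_of_zeros a b c d (complex_of_real p)"
  proof (rule zeros_limit)
    fix e :: real assume e: "e > 0"
    show "eventually (\<lambda>n. \<exists>x. \<bar>x - p\<bar> < e \<and> W a b c d n x = 0) sequentially"
    proof (rule lim_left_end[OF pos qp(1) _ _ Dp e])
      fix x assume x: "p \<le> x" "x \<le> q"
      show "c*x+d < 0 \<and> a*x+b < 0"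
        using B_neg[of x] A_sign(2)[of x] x qp bs AB by (auto simp: p_def)
    next
      fix x assume x: "p < x" "x \<le> q"
      show "(a*x+b)^2 + 4*(c*x+d) < 0" using Dl_neg[of x] x qp bs by (auto simp: p_def)
    qed
  qed
  show ?thesis using pos lim by (simp add: p_def)
qed

end



lemma z0_Dl:
  fixes a b c d z :: real
  assumes "(2-a)*z = b"
  shows "(2-a)^2 * ((a*z+b)^2 + 4*(c*z+d)) = 4 * Fq a b c d"
proof -
  have A: "a*z+b = 2*z" using assms by (simp add: algebra_simps)
  show ?thesis unfolding A Fq_def assms[symmetric] by (simp add: power2_eq_square algebra_simps)
qed

lemma g_Dl:
  fixes a b c d x :: real
  shows "4*((1-a)*x^2 - (b+c)*x - d) = (2*x - (a*x+b))^2 - ((a*x+b)^2 + 4*(c*x+d))"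
  by (simp add: power2_eq_square algebra_simps)

lemma g_root_eq:
  fixes a b c d p :: real
  shows "(1-a)*p^2 - (b+c)*p - d = 0 \<Longrightarrow> p^2 = (a*p+b)*p + (c*p+d)"
  by (simp add: power2_eq_square algebra_simps)

lemma Dg_F: "Deltag a b c d = Fq a b c d + DeltaD a b c d"
  by (simp add: Deltag_def Fq_def DeltaD_def xA_def power2_eq_square field_simps)

lemma xg_real:
  fixes a b c d :: real
  assumes a1: "a \<noteq> 1" and Dg: "Deltag a b c d > 0"
  defines "rm \<equiv> (b + c) / (2 * (1 - a)) - sqrt (Deltag a b c d) / (2 * \<bar>1 - a\<bar>)"
    and "rp \<equiv> (b + c) / (2 * (1 - a)) + sqrt (Deltag a b c d) / (2 * \<bar>1 - a\<bar>)"
  shows "xg_minus a b c d = complex_of_real rm" "xg_plus a b c d = complex_of_real rp" "rm < rp"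
    "\<And>x. (1-a)*x^2 - (b+c)*x - d = (1-a)*(x-rm)*(x-rp)"
    "(1-a)*(rm+rp) = b+c"
proof -
  define C where "C = (b + c) / (2 * (1 - a))"
  define T where "T = sqrt (Deltag a b c d) / (2 * \<bar>1 - a\<bar>)"
  have rmd: "rm = C - T" and rpd: "rp = C + T" by (simp_all add: rm_def rp_def C_def T_def)
  have a1': "1 - a \<noteq> 0" using a1 by simp
  have T0: "T > 0" using Dg a1' by (simp add: T_def)
  show "xg_minus a b c d = complex_of_real rm" "xg_plus a b c d = complex_of_real rp"
    using a1 Dg by (simp_all add: xg_minus_def xg_plus_def rm_def rp_def csqrt_of_real)
  show "rm < rp" using T0 rmd rpd by simp
  have T2: "T^2 = Deltag a b c d / (4*(1-a)^2)"
    using Dg by (simp add: T_def power_divide power_mult_distrib)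
  have "(1-a)*(rm+rp) = (2*(1-a))*C" by (simp add: rmd rpd algebra_simps)
  also have "\<dots> = b+c" unfolding C_def using a1' by (simp add: field_simps)
  finally show "(1-a)*(rm+rp) = b+c" .
  fix x
  have "(1-a)*(x-rm)*(x-rp) = (1-a)*((x-C)^2 - T^2)" by (simp add: rmd rpd power2_eq_square algebra_simps)
  also have "\<dots> = (1-a)*x^2 - (b+c)*x - d"
  proof -
    define k where "k = 1 - a"
    have k: "k \<noteq> 0" using a1' by (simp add: k_def)
    have Ck: "C = (b+c)/(2*k)" by (simp add: C_def k_def)
    have Dk: "Deltag a b c d = (b+c)^2 + 4*d*k" by (simp add: Deltag_def k_def)
    have e1: "k*(x-C)^2 = k*x^2 - (b+c)*x + (b+c)^2/(4*k)"
      unfolding Ck using k by (simp add: field_simps power2_eq_square)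
    have e2: "k*(Deltag a b c d / (4*(1-a)^2)) = (b+c)^2/(4*k) + d"
      unfolding Dk k_def[symmetric] using k by (simp add: field_simps power2_eq_square)
    have "(1-a)*((x-C)^2 - T^2) = k*(x-C)^2 - k*(Deltag a b c d / (4*(1-a)^2))"
      unfolding T2 k_def by (simp add: algebra_simps)
    also have "\<dots> = k*x^2 - (b+c)*x - d" unfolding e1 e2 by simp
    finally show ?thesis by (simp add: k_def)
  qed
  finally show "(1-a)*x^2 - (b+c)*x - d = (1-a)*(x-rm)*(x-rp)" by simp
qed

lemma groot_limit:
  fixes a b c d p sg :: real
  assumes "sg = 1 \<or> sg = -1" "(1-a)*p^2 - (b+c)*p - d = 0"
    "sg*(a*p+b) < 2 * sg * p" "sg*(a*p+b) < 0" "2*(1-a)*p - (b+c) \<noteq> 0"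
  shows "limit_of_zeros a b c d (complex_of_real p)"
  using lim_groot[OF assms(1) g_root_eq[OF assms(2)] assms(3-5)] by (intro zeros_limit)

lemma groot_pos:
  fixes a b c d p :: real
  assumes "(1-a)*p^2 - (b+c)*p - d = 0"
  shows "W a b c d n p = p^n"
  by (rule W_root) (use g_root_eq[OF assms] in simp)



definition good :: "real \<Rightarrow> real \<Rightarrow> real \<Rightarrow> real \<Rightarrow> real \<Rightarrow> real \<Rightarrow> bool" where
  "good a b c d u v \<longleftrightarrow> u \<le> xD_minus a b c d \<and> xD_plus a b c d \<le> v \<and> v < xB c d \<and> u < 0 \<and> 0 < v
     \<and> (\<forall>n. (-1)^n * W a b c d n u > 0 \<and> W a b c d n v > 0)
     \<and> limit_of_zeros a b c d (complex_of_real u) \<and> limit_of_zeros a b c d (complex_of_real v)"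

lemma prod_neg: "(x-m)*(x-p) < 0 \<Longrightarrow> m \<le> p \<Longrightarrow> m < x \<and> x < (p::real)"
  by (auto simp: mult_less_0_iff)
lemma prod_pos: "(x-m)*(x-p) > 0 \<Longrightarrow> x < m \<or> x > (p::real)"
  by (auto simp: zero_less_mult_iff)
lemma prod_le: "(x-m)*(x-p) \<le> 0 \<Longrightarrow> m \<le> p \<Longrightarrow> m \<le> x \<and> x \<le> (p::real)"
  by (auto simp: mult_le_0_iff)

lemma neg_pow_pos: "(u::real) < 0 \<Longrightarrow> (-1)^n * u^n > 0"
proof -
  assume "u < 0"
  then have "(-u)^n > 0" by simp
  then show ?thesis by (simp add: power_minus[of u n])
qed

context
  fixes a b c d :: real
  assumes a: "a>0" and c: "c>0" and b: "b<0" and d: "d<0" and AB: "xA a b < xB c d"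
begin

lemma DD_pos: "DeltaD a b c d > 0"
proof -
  have "c * xA a b + d < 0" using basics[OF a c b d AB] by blast
  then have "a^2 * (c * xA a b + d) < 0" using a by (simp add: mult_pos_neg)
  then show ?thesis unfolding DeltaD_def using zero_le_power2[of c] by linarith
qed

lemma z0_facts:
  assumes "a \<noteq> 2"
  shows "(2-a) * (b/(2-a)) = b" "((a*(b/(2-a))+b)^2 + 4*(c*(b/(2-a))+d)) = 4 * Fq a b c d / (2-a)^2"
    "2*(b/(2-a)) - (a*(b/(2-a))+b) = 0"
proof -
  have n: "2 - a \<noteq> 0" using assms by simp
  show e: "(2-a) * (b/(2-a)) = b" using n by simp
  have h: "(2-a)^2 * ((a*(b/(2-a))+b)^2 + 4*(c*(b/(2-a))+d)) = 4 * Fq a b c d" by (rule z0_Dl[OF e])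
  have "((a*(b/(2-a))+b)^2 + 4*(c*(b/(2-a))+d)) = ((2-a)^2 * ((a*(b/(2-a))+b)^2 + 4*(c*(b/(2-a))+d))) / (2-a)^2"
    by (rule nonzero_mult_div_cancel_left[symmetric]) (use n in simp)
  also have "\<dots> = 4 * Fq a b c d / (2-a)^2" by (simp only: h)
  finally show "((a*(b/(2-a))+b)^2 + 4*(c*(b/(2-a))+d)) = 4 * Fq a b c d / (2-a)^2" .
  have gen: "\<And>y::real. 2*y - (a*y+b) = (2-a)*y - b" by (simp add: algebra_simps)
  have "2*(b/(2-a)) - (a*(b/(2-a))+b) = (2-a)*(b/(2-a)) - b" by (rule gen)
  then show "2*(b/(2-a)) - (a*(b/(2-a))+b) = 0" using e by simp
qed

lemma g_at_Dl0:
  assumes "(a*x+b)^2 + 4*(c*x+d) = 0" "(2-a)*x \<noteq> b"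
  shows "(1-a)*x^2 - (b+c)*x - d > 0"
proof -
  have "2*x - (a*x+b) \<noteq> 0" using assms(2) by (simp add: algebra_simps)
  then have P: "(2*x - (a*x+b))^2 > 0" by simp
  have "4*((1-a)*x^2 - (b+c)*x - d) = (2*x - (a*x+b))^2" using g_Dl[of a x b c d] assms(1) by simp
  then have "4*((1-a)*x^2 - (b+c)*x - d) > 0" using P by simp
  then show ?thesis by simp
qed

lemma g_at_Dl0': "(a*x+b)^2 + 4*(c*x+d) = 0 \<Longrightarrow> (1-a)*x^2 - (b+c)*x - d \<ge> 0"
proof -
  assume h: "(a*x+b)^2 + 4*(c*x+d) = 0"
  have "4*((1-a)*x^2 - (b+c)*x - d) = (2*x - (a*x+b))^2" using g_Dl[of a x b c d] h by simp
  then have "4*((1-a)*x^2 - (b+c)*x - d) \<ge> 0" by simp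
  then show ?thesis by simp
qed

lemma Dl_xm: "(a*xD_minus a b c d+b)^2 + 4*(c*xD_minus a b c d+d) = 0"
  unfolding Dl_fac[OF a c b d AB] by simp
lemma Dl_xp: "(a*xD_plus a b c d+b)^2 + 4*(c*xD_plus a b c d+d) = 0"
  unfolding Dl_fac[OF a c b d AB] by simp

lemma case1:
  assumes "a < 2" "Fq a b c d \<le> 0"
  shows "good a b c d (xD_minus a b c d) (xD_plus a b c d)"
proof -
  note bs = basics[OF a c b d AB]
  define z where "z = b/(2-a)"
  have zf: "(2-a)*z = b" "(a*z+b)^2 + 4*(c*z+d) = 4 * Fq a b c d / (2-a)^2"
    using z0_facts assms by (simp_all add: z_def)
  have "(a*z+b)^2 + 4*(c*z+d) \<le> 0" using zf(2) assms by (simp add: divide_nonpos_pos)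
  then have zin: "xD_minus a b c d \<le> z" "z \<le> xD_plus a b c d" using Dl_le0[OF a c b d AB] by auto
  have u1: "(2-a) * xD_minus a b c d \<le> b" using zin(1) zf(1) assms(1) by (metis mult_left_mono diff_ge_0_iff_ge less_imp_le)
  have v1: "(2-a) * xD_plus a b c d \<ge> b" using bs assms(1) b by (smt (verit) mult_pos_pos)
  have u0: "xD_minus a b c d < 0"
  proof (rule ccontr)
    assume "\<not> ?thesis"
    then have "(2-a) * xD_minus a b c d \<ge> 0" using assms(1) by simp
    then show False using u1 b by linarith
  qed
  show ?thesis unfolding good_def
    using end_u[OF a c b d AB u1] end_v[OF a c b d AB v1] u0 bs by auto
qed

lemma case2:
  assumes "a > 2" "Fq a b c d < 0"
  shows "\<exists>u v. uv a b c d = (complex_of_real u, complex_of_real v) \<and> good a b c d u v"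
proof -
  note bs = basics[OF a c b d AB]
  have a1: "a \<noteq> 1" using assms by simp
  have Dg: "Deltag a b c d > 0"
  proof -
    have "4*d*(1-a) > 0" using d assms(1) by (simp add: mult_neg_neg)
    then show ?thesis unfolding Deltag_def using zero_le_power2[of "b+c"] by linarith
  qed
  define rm where "rm = (b + c) / (2 * (1 - a)) - sqrt (Deltag a b c d) / (2 * \<bar>1 - a\<bar>)"
  define rp where "rp = (b + c) / (2 * (1 - a)) + sqrt (Deltag a b c d) / (2 * \<bar>1 - a\<bar>)"
  note xr = xg_real[OF a1 Dg, folded rm_def rp_def]
  have uvd: "uv a b c d = (complex_of_real rm, complex_of_real rp)"
    using assms xr by (simp add: uv_def)
  define z where "z = b/(2-a)"
  have zf: "(2-a)*z = b" "(a*z+b)^2 + 4*(c*z+d) = 4 * Fq a b c d / (2-a)^2"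
    using z0_facts assms by (simp_all add: z_def)
  have "(a*z+b)^2 + 4*(c*z+d) < 0" using zf(2) assms by (simp add: divide_neg_pos)
  then have zin: "xD_minus a b c d < z" "z < xD_plus a b c d" using Dl_lt0[OF a c b d AB] by auto
  have ka: "1 - a < 0" using assms by simp
  have gpos_in: "rm < x \<and> x < rp" if "(1-a)*x^2 - (b+c)*x - d > 0" for x
  proof -
    have "(1-a)*((x-rm)*(x-rp)) > 0" using that xr(4)[of x] by (simp add: mult.assoc)
    then have "(x-rm)*(x-rp) < 0" using zero_less_mult_iff[of "1-a" "(x-rm)*(x-rp)"] ka by linarith
    then show ?thesis using prod_neg[OF _ less_imp_le[OF xr(3)]] by blast
  qed
  have neq: "(2-a)*x \<noteq> b" if "x \<noteq> z" for x
  proof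
    assume "(2-a)*x = b"
    then have "(2-a)*x = (2-a)*z" using zf(1) by simp
    then have "x = z" using assms(1) by simp
    then show False using that by simp
  qed
  have gm: "(1-a)*(xD_minus a b c d)^2 - (b+c)*xD_minus a b c d - d > 0"
    by (rule g_at_Dl0[OF Dl_xm neq]) (use zin in simp)
  have gp: "(1-a)*(xD_plus a b c d)^2 - (b+c)*xD_plus a b c d - d > 0"
    by (rule g_at_Dl0[OF Dl_xp neq]) (use zin in simp)
  have g0: "(1-a)*0^2 - (b+c)*0 - d > 0" using d by simp
  have m1: "rm < xD_minus a b c d" using gpos_in[OF gm] by simp
  have p1: "xD_plus a b c d < rp" using gpos_in[OF gp] by simp
  have m0: "rm < 0" "0 < rp" using gpos_in[OF g0] by simp_all
  have pB: "rp < xB c d"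
  proof -
    let ?x = "xB c d"
    have B0: "c * ?x + d = 0" using c by (simp add: xB_def)
    have "(a-2) * ?x > (a-2) * z" using zin bs assms(1) by simp
    then have "a * ?x + b > 2 * ?x" using zf(1) by (simp add: algebra_simps)
    then have "?x * (?x - (a * ?x + b)) < 0" using bs by (simp add: mult_pos_neg)
    moreover have "(1-a)*?x^2 - (b+c)*?x - d = ?x * (?x - (a * ?x + b)) - (c * ?x + d)"
      by (simp add: power2_eq_square algebra_simps)
    ultimately have "(1-a)*?x^2 - (b+c)*?x - d < 0" using B0 by simp
    then have "(1-a)*((?x-rm)*(?x-rp)) < 0" using xr(4)[of ?x] by (simp add: mult.assoc)
    then have "(?x-rm)*(?x-rp) > 0" using mult_less_0_iff[of "1-a" "(?x-rm)*(?x-rp)"] ka by linarith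
    then have "?x < rm \<or> ?x > rp" by (rule prod_pos)
    then show ?thesis using m1 bs by linarith
  qed
  have grm: "(1-a)*rm^2 - (b+c)*rm - d = 0" using xr(4)[of rm] by simp
  have grp: "(1-a)*rp^2 - (b+c)*rp - d = 0" using xr(4)[of rp] by simp
  have hm: "2*(1-a)*rm - (b+c) \<noteq> 0"
  proof -
    have "2*(1-a)*rm - (b+c) = (1-a)*(rm - rp)" using xr(5) by (simp add: algebra_simps)
    then show ?thesis using ka xr(3) by simp
  qed
  have hp: "2*(1-a)*rp - (b+c) \<noteq> 0"
  proof -
    have "2*(1-a)*rp - (b+c) = (1-a)*(rp - rm)" using xr(5) by (simp add: algebra_simps)
    then show ?thesis using ka xr(3) by simp
  qed
  have limm: "limit_of_zeros a b c d (complex_of_real rm)"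
  proof (rule groot_limit[of 1, OF _ grm _ _ hm])
    have "(2-a)*rm > 0" using assms(1) m0 by (simp add: mult_neg_neg)
    then show "1*(a*rm+b) < 2 * 1 * rm" using b by (simp add: algebra_simps)
    show "1*(a*rm+b) < 0" using A_sign(2)[OF a c b d AB, of rm] m1 bs by simp
  qed simp
  have limp: "limit_of_zeros a b c d (complex_of_real rp)"
  proof (rule groot_limit[of "-1", OF _ grp _ _ hp])
    have "(a-2)*rp > (a-2)*z" using assms(1) p1 zin by simp
    then show "-1*(a*rp+b) < 2 * (-1) * rp" using zf(1) by (simp add: algebra_simps)
    show "-1*(a*rp+b) < 0" using A_sign(1)[OF a c b d AB, of rp] p1 bs by simp
  qed simp
  have pos: "\<forall>n. (-1)^n * W a b c d n rm > 0 \<and> W a b c d n rp > 0"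
    using groot_pos[OF grm] groot_pos[OF grp] neg_pow_pos[OF m0(1)] m0 by simp
  show ?thesis
    by (rule exI[of _ rm], rule exI[of _ rp])
       (use uvd m1 p1 pB m0 pos limm limp in \<open>simp add: good_def\<close>)
qed

lemma case3:
  assumes "a < 1" "Fq a b c d > 0"
  shows "\<exists>u v. uv a b c d = (complex_of_real u, complex_of_real v) \<and> good a b c d u v"
proof -
  note bs = basics[OF a c b d AB]
  have a1: "a \<noteq> 1" using assms by simp
  have Dg: "Deltag a b c d > 0" using Dg_F DD_pos assms(2) by simp
  define rm where "rm = (b + c) / (2 * (1 - a)) - sqrt (Deltag a b c d) / (2 * \<bar>1 - a\<bar>)"
  define rp where "rp = (b + c) / (2 * (1 - a)) + sqrt (Deltag a b c d) / (2 * \<bar>1 - a\<bar>)"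
  note xr = xg_real[OF a1 Dg, folded rm_def rp_def]
  have uvd: "uv a b c d = (complex_of_real rp, complex_of_real (xD_plus a b c d))"
    using assms xr by (simp add: uv_def)
  define z where "z = b/(2-a)"
  have zf: "(2-a)*z = b" "(a*z+b)^2 + 4*(c*z+d) = 4 * Fq a b c d / (2-a)^2" "2*z - (a*z+b) = 0"
    using z0_facts assms by (simp_all add: z_def)
  have Dz: "(a*z+b)^2 + 4*(c*z+d) > 0" using zf(2) assms by simp
  have z0: "z < 0" using assms(1) b by (simp add: z_def divide_neg_pos)
  have zm: "z < xD_minus a b c d"
  proof (rule ccontr)
    assume "\<not> ?thesis"
    moreover have "z < xD_plus a b c d" using z0 bs by linarith
    ultimately have "(a*z+b)^2 + 4*(c*z+d) \<le> 0"
      unfolding Dl_fac[OF a c b d AB] using a by (simp add: mult_nonneg_nonpos mult_le_0_iff)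
    then show False using Dz by simp
  qed
  have ka: "1 - a > 0" using assms by simp
  have gz: "(1-a)*z^2 - (b+c)*z - d < 0"
  proof -
    have "4*((1-a)*z^2 - (b+c)*z - d) = (2*z - (a*z+b))^2 - ((a*z+b)^2 + 4*(c*z+d))" by (rule g_Dl)
    then have "4*((1-a)*z^2 - (b+c)*z - d) < 0" using zf(3) Dz by simp
    then show ?thesis by simp
  qed
  have zin: "rm < z \<and> z < rp"
  proof -
    have "(1-a)*((z-rm)*(z-rp)) < 0" using gz xr(4)[of z] by (simp add: mult.assoc)
    then have "(z-rm)*(z-rp) < 0" using mult_less_0_iff[of "1-a" "(z-rm)*(z-rp)"] ka by linarith
    then show ?thesis using prod_neg[OF _ less_imp_le[OF xr(3)]] by blast
  qed
  have neq: "(2-a)*x \<noteq> b" if "x \<noteq> z" for x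
  proof
    assume "(2-a)*x = b"
    then have "(2-a)*x = (2-a)*z" using zf(1) by simp
    then have "x = z" using assms(1) by simp
    then show False using that by simp
  qed
  have gm: "(1-a)*(xD_minus a b c d)^2 - (b+c)*xD_minus a b c d - d > 0"
    by (rule g_at_Dl0[OF Dl_xm neq]) (use zm in simp)
  have pm: "rp < xD_minus a b c d"
  proof -
    let ?x = "xD_minus a b c d"
    have "(1-a)*((?x-rm)*(?x-rp)) > 0" using gm xr(4)[of ?x] by (simp add: mult.assoc)
    then have "(?x-rm)*(?x-rp) > 0" using zero_less_mult_iff[of "1-a" "(?x-rm)*(?x-rp)"] ka by linarith
    then have "?x < rm \<or> ?x > rp" by (rule prod_pos)
    then show ?thesis using zm zin by linarith
  qed
  have grp: "(1-a)*rp^2 - (b+c)*rp - d = 0" using xr(4)[of rp] by simp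
  have rp0: "rp < 0"
  proof (rule ccontr)
    assume "\<not> ?thesis"
    then have r0: "rp \<ge> 0" by simp
    have Ar: "a*rp+b < 0" using A_sign(2)[OF a c b d AB, of rp] pm bs by simp
    have Br: "c*rp+d < 0" using B_neg[OF a c b d AB, of rp] pm bs AB by simp
    have "(1-a)*rp^2 - (b+c)*rp - d = rp^2 - (a*rp+b)*rp - (c*rp+d)" by (simp add: power2_eq_square algebra_simps)
    moreover have "(a*rp+b)*rp \<le> 0" using Ar r0 by (simp add: mult_nonpos_nonneg)
    moreover have "rp^2 \<ge> 0" by simp
    ultimately have "(1-a)*rp^2 - (b+c)*rp - d > 0" using Br by linarith
    then show False using grp by simp
  qed
  have hp: "2*(1-a)*rp - (b+c) \<noteq> 0"
  proof -
    have "2*(1-a)*rp - (b+c) = (1-a)*(rp - rm)" using xr(5) by (simp add: algebra_simps)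
    then show ?thesis using ka xr(3) by simp
  qed
  have limp: "limit_of_zeros a b c d (complex_of_real rp)"
  proof (rule groot_limit[of 1, OF _ grp _ _ hp])
    have "(2-a)*rp > (2-a)*z" using assms(1) zin by simp
    then show "1*(a*rp+b) < 2 * 1 * rp" using zf(1) by (simp add: algebra_simps)
    show "1*(a*rp+b) < 0" using A_sign(2)[OF a c b d AB, of rp] pm bs by simp
  qed simp
  have v1: "(2-a) * xD_plus a b c d \<ge> b" using bs assms(1) b by (smt (verit) mult_pos_pos)
  note ev = end_v[OF a c b d AB v1]
  have pos: "\<forall>n. (-1)^n * W a b c d n rp > 0"
    using groot_pos[OF grp] neg_pow_pos[OF rp0] by simp
  show ?thesis
    by (rule exI[of _ rp], rule exI[of _ "xD_plus a b c d"])
       (use uvd pm rp0 pos limp ev bs in \<open>simp add: good_def\<close>)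
qed

lemma v_case4:
  assumes "\<not> (a < 2 \<and> Fq a b c d \<le> 0)" "\<not> (a > 2 \<and> Fq a b c d < 0)"
  shows "(2-a) * xD_plus a b c d \<ge> b"
proof (cases "a \<le> 2")
  case True
  have "(2-a) * xD_plus a b c d \<ge> 0" using True basics[OF a c b d AB] by simp
  then show ?thesis using b by linarith
next
  case False
  then have a2: "a > 2" by simp
  then have F: "Fq a b c d \<ge> 0" using assms(2) by simp
  define z where "z = b/(2-a)"
  have zf: "(2-a)*z = b" "(a*z+b)^2 + 4*(c*z+d) = 4 * Fq a b c d / (2-a)^2" "2*z - (a*z+b) = 0"
    using z0_facts a2 by (simp_all add: z_def)
  have z0: "z > 0" using a2 b by (simp add: z_def divide_neg_neg)
  have zA: "z > xA a b" using A_sign(1)[OF a c b d AB, of z] zf(3) z0 by simp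
  have Dz: "(a*z+b)^2 + 4*(c*z+d) \<ge> 0" using zf(2) F by simp
  have zp: "z \<ge> xD_plus a b c d"
  proof (rule ccontr)
    assume "\<not> ?thesis"
    then have "(a*z+b)^2 + 4*(c*z+d) < 0" using Dl_neg[OF a c b d AB, of z] zA basics[OF a c b d AB] by simp
    then show False using Dz by simp
  qed
  have "(2-a) * xD_plus a b c d \<ge> (2-a) * z" using zp a2 by (simp add: mult_left_mono_neg)
  then show ?thesis using zf(1) by simp
qed

lemma case4:
  assumes "\<not> (a < 2 \<and> Fq a b c d \<le> 0)" "\<not> (a > 2 \<and> Fq a b c d < 0)" "\<not> (a < 1 \<and> Fq a b c d > 0)"
  shows "\<exists>u v. uv a b c d = (complex_of_real u, complex_of_real v) \<and> good a b c d u v"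
proof -
  note bs = basics[OF a c b d AB]
  have v1: "(2-a) * xD_plus a b c d \<ge> b" by (rule v_case4[OF assms(1,2)])
  note ev = end_v[OF a c b d AB v1]
  have gm: "(1-a)*(xD_minus a b c d)^2 - (b+c)*xD_minus a b c d - d \<ge> 0" by (rule g_at_Dl0'[OF Dl_xm])
  have a1: "a \<ge> 1"
  proof (rule ccontr)
    assume "\<not> ?thesis"
    then show False using assms(1,3) by auto
  qed
  show ?thesis
  proof (cases "a = 1")
    case True
    have F: "Fq a b c d > 0" using assms(1) True by auto
    have Fe: "Fq a b c d = d + b*(b+c)" using True by (simp add: Fq_def algebra_simps power2_eq_square)
    have bc: "b + c < 0"
    proof (rule ccontr)
      assume "\<not> ?thesis"
      then have "b*(b+c) \<le> 0" using b by (simp add: mult_nonpos_nonneg)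
      then show False using F Fe d by linarith
    qed
    define p where "p = -d/(b+c)"
    have uvd: "uv a b c d = (complex_of_real p, complex_of_real (xD_plus a b c d))"
      using assms True bc by (simp add: uv_def xg_minus_def p_def)
    have p0: "p < 0" using bc d by (simp add: p_def divide_neg_neg)
    have gp: "(1-a)*p^2 - (b+c)*p - d = 0" using True bc by (simp add: p_def)
    have pm: "p \<le> xD_minus a b c d"
    proof -
      have "-(b+c) * xD_minus a b c d - d \<ge> 0" using gm True by (simp add: algebra_simps)
      moreover have "-(b+c) * p - d = 0" using gp True by (simp add: algebra_simps)
      ultimately have "-(b+c) * p \<le> -(b+c) * xD_minus a b c d" by linarith
      then show ?thesis using mult_le_cancel_left_pos[of "-(b+c)" p "xD_minus a b c d"] bc by linarith
    qed
    have bp: "b < p"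
    proof -
      have e1: "-(b+c) * b - d = - Fq a b c d" using Fe by (simp add: algebra_simps)
      have e2: "-(b+c) * p - d = 0" using gp True by (simp add: algebra_simps)
      have "-(b+c) * b < -(b+c) * p" using e1 e2 F by linarith
      then show ?thesis using mult_less_cancel_left_pos[of "-(b+c)" b p] bc by linarith
    qed
    have limp: "limit_of_zeros a b c d (complex_of_real p)"
    proof (rule groot_limit[of 1, OF _ gp])
      show "1*(a*p+b) < 2 * 1 * p" using bp True by simp
      show "1*(a*p+b) < 0" using A_sign(2)[OF a c b d AB, of p] pm bs by simp
      show "2*(1-a)*p - (b+c) \<noteq> 0" using True bc by simp
    qed simp
    have pos: "\<forall>n. (-1)^n * W a b c d n p > 0"
      using groot_pos[OF gp] neg_pow_pos[OF p0] by simp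
    show ?thesis
      by (rule exI[of _ p], rule exI[of _ "xD_plus a b c d"])
         (use uvd pm p0 pos limp ev bs in \<open>simp add: good_def\<close>)
  next
    case False
    then have a1': "a > 1" "a \<noteq> 1" using a1 by auto
    have Dg: "Deltag a b c d > 0"
    proof -
      have "4*d*(1-a) > 0" using d a1' by (simp add: mult_neg_neg)
      then show ?thesis unfolding Deltag_def using zero_le_power2[of "b+c"] by linarith
    qed
    define rm where "rm = (b + c) / (2 * (1 - a)) - sqrt (Deltag a b c d) / (2 * \<bar>1 - a\<bar>)"
    define rp where "rp = (b + c) / (2 * (1 - a)) + sqrt (Deltag a b c d) / (2 * \<bar>1 - a\<bar>)"
    note xr = xg_real[OF a1'(2) Dg, folded rm_def rp_def]
    have "uv a b c d = (xg_minus a b c d, complex_of_real (xD_plus a b c d))"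
      using assms unfolding uv_def by (metis (full_types))
    then have uvd: "uv a b c d = (complex_of_real rm, complex_of_real (xD_plus a b c d))"
      using xr(1) by simp
    have ka: "1 - a < 0" using a1' by simp
    have g0: "(1-a)*0^2 - (b+c)*0 - d > 0" using d by simp
    have m0: "rm < 0" "0 < rp"
    proof -
      have "(1-a)*((0-rm)*(0-rp)) > 0" using g0 xr(4)[of 0] by (simp add: mult.assoc)
      then have "(0-rm)*(0-rp) < 0" using zero_less_mult_iff[of "1-a" "(0-rm)*(0-rp)"] ka by linarith
      then have "rm < 0 \<and> 0 < rp" using prod_neg[OF _ less_imp_le[OF xr(3)]] by blast
      then show "rm < 0" "0 < rp" by auto
    qed
    have mm: "rm \<le> xD_minus a b c d"
    proof -
      let ?x = "xD_minus a b c d"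
      have "(1-a)*((?x-rm)*(?x-rp)) \<ge> 0" using gm xr(4)[of ?x] by (simp add: mult.assoc)
      then have "(?x-rm)*(?x-rp) \<le> 0" using zero_le_mult_iff[of "1-a" "(?x-rm)*(?x-rp)"] ka by linarith
      then show ?thesis using prod_le[OF _ less_imp_le[OF xr(3)]] by blast
    qed
    have grm: "(1-a)*rm^2 - (b+c)*rm - d = 0" using xr(4)[of rm] by simp
    have hm: "2*(1-a)*rm - (b+c) \<noteq> 0"
    proof -
      have "2*(1-a)*rm - (b+c) = (1-a)*(rm - rp)" using xr(5) by (simp add: algebra_simps)
      then show ?thesis using ka xr(3) by simp
    qed
    have dom: "(2-a)*rm > b"
    proof (cases "a \<ge> 2")
      case True
      then have "(2-a)*rm \<ge> 0" using m0 by (simp add: mult_nonpos_nonpos)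
      then show ?thesis using b by linarith
    next
      case False
      then have a2: "a < 2" by simp
      have F: "Fq a b c d > 0" using assms(1) a2 by auto
      define z where "z = b/(2-a)"
      have zf: "(2-a)*z = b" "(a*z+b)^2 + 4*(c*z+d) = 4 * Fq a b c d / (2-a)^2" "2*z - (a*z+b) = 0"
        using z0_facts a2 by (simp_all add: z_def)
      have Dz: "(a*z+b)^2 + 4*(c*z+d) > 0" using zf(2) F a2 by simp
      have z0: "z < 0" using a2 b by (simp add: z_def divide_neg_pos)
      have gz: "(1-a)*z^2 - (b+c)*z - d < 0"
      proof -
        have "4*((1-a)*z^2 - (b+c)*z - d) = (2*z - (a*z+b))^2 - ((a*z+b)^2 + 4*(c*z+d))" by (rule g_Dl)
        then have "4*((1-a)*z^2 - (b+c)*z - d) < 0" using zf(3) Dz by simp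
        then show ?thesis by simp
      qed
      have "(1-a)*((z-rm)*(z-rp)) < 0" using gz xr(4)[of z] by (simp add: mult.assoc)
      then have "(z-rm)*(z-rp) > 0" using mult_less_0_iff[of "1-a" "(z-rm)*(z-rp)"] ka by linarith
      then have "z < rm \<or> z > rp" by (rule prod_pos)
      then have "z < rm" using z0 m0 by linarith
      then have "(2-a)*z < (2-a)*rm" using a2 by simp
      then show ?thesis using zf(1) by simp
    qed
    have limm: "limit_of_zeros a b c d (complex_of_real rm)"
    proof (rule groot_limit[of 1, OF _ grm _ _ hm])
      show "1*(a*rm+b) < 2 * 1 * rm" using dom by (simp add: algebra_simps)
      show "1*(a*rm+b) < 0" using A_sign(2)[OF a c b d AB, of rm] mm bs by simp
    qed simp
    have pos: "\<forall>n. (-1)^n * W a b c d n rm > 0"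
      using groot_pos[OF grm] neg_pow_pos[OF m0(1)] by simp
    show ?thesis
      by (rule exI[of _ rm], rule exI[of _ "xD_plus a b c d"])
         (use uvd mm m0 pos limm ev bs in \<open>simp add: good_def\<close>)
  qed
qed

lemma main_exists:
  "\<exists>u v. uv a b c d = (complex_of_real u, complex_of_real v) \<and> good a b c d u v"
proof -
  consider "a < 2 \<and> Fq a b c d \<le> 0" | "\<not>(a < 2 \<and> Fq a b c d \<le> 0) \<and> a > 2 \<and> Fq a b c d < 0"
    | "\<not>(a < 2 \<and> Fq a b c d \<le> 0) \<and> \<not>(a > 2 \<and> Fq a b c d < 0) \<and> a < 1 \<and> Fq a b c d > 0"
    | "\<not>(a < 2 \<and> Fq a b c d \<le> 0) \<and> \<not>(a > 2 \<and> Fq a b c d < 0) \<and> \<not>(a < 1 \<and> Fq a b c d > 0)"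
    by blast
  then show ?thesis
  proof cases
    case 1
    then have "uv a b c d = (complex_of_real (xD_minus a b c d), complex_of_real (xD_plus a b c d))"
      by (simp add: uv_def)
    then show ?thesis using case1 1 by blast
  next
    case 2 then show ?thesis using case2 by blast
  next
    case 3 then show ?thesis using case3 by blast
  next
    case 4 then show ?thesis using case4 by blast
  qed
qed

end


theorem lemma3p2:
  fixes a b c d :: real
  assumes "a > 0" and "c > 0" and "b < 0" and "d < 0"
    and "xA a b < xB c d"
  shows "Im (fst (uv a b c d)) = 0 \<and> Im (snd (uv a b c d)) = 0
    \<and> Re (fst (uv a b c d)) \<le> xD_minus a b c d
    \<and> xD_minus a b c d < xA a b
    \<and> xA a b < xD_plus a b c d
    \<and> xD_plus a b c d \<le> Re (snd (uv a b c d))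
    \<and> Re (snd (uv a b c d)) < xB c d
    \<and> Re (fst (uv a b c d)) < 0 \<and> 0 < Re (snd (uv a b c d))
    \<and> (\<forall>n. (-1) ^ n * W a b c d n (Re (fst (uv a b c d))) > 0
           \<and> W a b c d n (Re (snd (uv a b c d))) > 0)
    \<and> limit_of_zeros a b c d (fst (uv a b c d))
    \<and> limit_of_zeros a b c d (snd (uv a b c d))"
proof -
  obtain u v where uvd: "uv a b c d = (complex_of_real u, complex_of_real v)" and g: "good a b c d u v"
    using main_exists[OF assms] by blast
  note bs = basics[OF assms]
  show ?thesis using g bs unfolding uvd good_def by simp
qed

end
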